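(* Let $d\ge 1$, let $\mathbf C_1,\mathbf C_2$ be real symmetric strictly positive-definite $d\times d$ matrices, let $\lambda_1,\lambda_2\in[0,1]$ with $\lambda_1+\lambda_2=1$, and set $\mathbf C=\lambda_1\mathbf C_1+\lambda_2\mathbf C_2$. For $\mathbf t\in\mathbb R^d$ define $$F^{(1)}(\mathbf t)=\sum_{a=1,2}\lambda_a\exp\Big(\tfrac12\mathbf t^{\rm T}\mathbf C_a\mathbf t\Big)-\exp\Big(\tfrac12\mathbf t^{\rm T}\mathbf C\mathbf t\Big),$$ $$F^{(2)}(\mathbf t)=F^{(1)}(\mathbf t)\,\log\big[(2\pi)^d\det\mathbf C\big]+\sum_{a=1,2}\lambda_a\exp\Big(\tfrac12\mathbf t^{\rm T}\mathbf C_a\mathbf t\Big)\,\mathrm{tr}\big(\mathbf C^{-1}\mathbf C_a\big)-d\exp\Big(\tfrac12\mathbf t^{\rm T}\mathbf C\mathbf t\Big),$$ and $\mathbb S=\{\mathbf t\in\mathbb R^d:\ F^{(1)}(\mathbf t)\ge 0\ \text{and}\ F^{(2)}(\mathbf t)\le 0\}$. If $\mathbf t\in\mathbb S$, then $$h(f^{\rm No}_{\mathbf C})\exp\Big(\tfrac12\mathbf t^{\rm T}\mathbf C\mathbf t\Big)-\lambda_1h(f^{\rm No}_{\mathbf C_1})\exp\Big(\tfrac12\mathbf t^{\rm T}\mathbf C_1\mathbf t\Big)-\lambda_2h(f^{\rm No}_{\mathbf C_2})\exp\Big(\tfrac12\mathbf t^{\rm T}\mathbf C_2\mathbf t\Big)\ge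 0,$$ i.e. $$\log\big[(2\pi e)^d\det\mathbf C\big]\exp\Big(\tfrac12\mathbf t^{\rm T}\mathbf C\mathbf t\Big)-\sum_{a=1,2}\lambda_a\log\big[(2\pi e)^d\det\mathbf C_a\big]\exp\Big(\tfrac12\mathbf t^{\rm T}\mathbf C_a\mathbf t\Big)\ge 0,$$ with equality if and only if $\lambda_1\lambda_2=0$ or $\mathbf C_1=\mathbf C_2$.
   Context: $\log$ denotes the natural logarithm. For a strictly positive-definite $d\times d$ matrix $\mathbf C$, $f^{\rm No}_{\mathbf C}(\mathbf x)=(2\pi)^{-d/2}(\det\mathbf C)^{-1/2}\exp(-\tfrac12\mathbf x^{\rm T}\mathbf C^{-1}\mathbf x)$ is the density of the centered normal distribution $\mathrm N(\mathbf 0,\mathbf C)$ on $\mathbb R^d$, and $h(f)=-\int_{\mathbb R^d}f\log f\,d\mathbf x$ is the Shannon differential entropy, so that $h(f^{\rm No}_{\mathbf C})=\tfrac12\log\big[(2\pi e)^d\det\mathbf C\big]$. The left-hand side equals $\sigma_{\mathbf t}(\mathbf C)-\lambda_1\sigma_{\mathbf t}(\mathbf C_1)-\lambda_2\sigma_{\mathbf t}(\mathbf C_2)$ where $\sigma_{\mathbf t}(\mathbf C)=-\int_{\mathbb R^d}e^{\mathbf t^{\rm T}\mathbf x}f^{\rm No}_{\mathbf C}(\mathbf x)\log f^{\rm No}_{\mathbf C}(\mathbf x)\,d\mathbf x$ is the weighted differential entropy with exponential weight function $\phi(\mathbf x)=e^{\mathbf t^{\rm T}\mathbf x}$. *)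

theory Defs
  imports "HOL-Analysis.Analysis"
begin

definition spd :: "real^'n^'n \<Rightarrow> bool" where
  "spd A \<longleftrightarrow> transpose A = A \<and> (\<forall>x. x \<noteq> 0 \<longrightarrow> x \<bullet> (A *v x) > 0)"

definition qform :: "real^'n^'n \<Rightarrow> real^'n \<Rightarrow> real" where
  "qform A t = t \<bullet> (A *v t)"

end

theory Submission
  imports Defs
begin

lemma sym_inner:
  fixes M :: "real^'n^'n"
  assumes "transpose M = M"
  shows "x \<bullet> (M *v y) = y \<bullet> (M *v x)"
proof -
  have "x \<bullet> (M *v y) = (\<Sum>i\<in>UNIV. \<Sum>j\<in>UNIV. x$i * M$i$j * y$j)"
    by (simp add: inner_vec_def matrix_vector_mult_def sum_distrib_left mult.assoc)
  also have "\<dots> = (\<Sum>j\<in>UNIV. \<Sum>i\<in>UNIV. x$i * M$i$j * y$j)" by (rule sum.swap)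
  also have "\<dots> = y \<bullet> (M *v x)"
  proof -
    have "M$i$j = M$j$i" for i j using assms by (metis transpose_def vec_lambda_beta)
    then show ?thesis
      by (simp add: inner_vec_def matrix_vector_mult_def sum_distrib_left mult.assoc mult.commute mult.left_commute)
  qed
  finally show ?thesis .
qed

lemma quad_trick:
  fixes a b :: real
  assumes "\<And>s. 2 * s * a \<le> s^2 * b"
  shows "a = 0"
proof (rule ccontr)
  assume "a \<noteq> 0"
  define t where "t = 1 / (\<bar>b\<bar> + 1)"
  have t: "t > 0" "t * \<bar>b\<bar> < 1" unfolding t_def by (auto simp: field_simps)
  have "2*(t*a)*a \<le> (t*a)^2*b" by (rule assms)
  hence "t * a^2 * 2 \<le> t * a^2 * (t*b)" by (simp add: power2_eq_square algebra_simps)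
  moreover have "t * a^2 > 0" using t \<open>a\<noteq>0\<close> by simp
  ultimately have "2 \<le> t*b" using mult_le_cancel_left_pos by blast
  moreover have "t*b \<le> t*\<bar>b\<bar>" using t by (simp add: mult_left_mono)
  ultimately show False using t by linarith
qed

lemma surj_spd:
  fixes C :: "real^'n^'n"
  assumes "spd C"
  shows "\<exists>z. C *v z = r"
proof -
  have "inj ((*v) C)"
    unfolding vec.inj_iff_eq_0
  proof (intro allI impI)
    fix x assume "C *v x = 0"
    then show "x = 0" using assms unfolding spd_def by (metis inner_zero_right less_irrefl)
  qed
  then obtain B where "B ** C = mat 1" using matrix_left_invertible_injective by blast
  hence "C ** B = mat 1" using matrix_left_right_inverse by blast
  hence "C *v (B *v r) = r" by (metis matrix_vector_mul_assoc matrix_vector_mul_lid)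
  thus ?thesis by blast
qed

lemma scaleR_mv:
  fixes M :: "real^'n^'m"
  shows "(k *\<^sub>R M) *v x = k *\<^sub>R (M *v x)"
  by (simp add: vec_eq_iff matrix_vector_mult_def sum_distrib_left mult.assoc)

lemma qexp:
  fixes M :: "real^'n^'n"
  assumes "transpose M = M"
  shows "(w + s *\<^sub>R z) \<bullet> (M *v (w + s *\<^sub>R z)) = w \<bullet> (M *v w) + 2 * s * (z \<bullet> (M *v w)) + s^2 * (z \<bullet> (M *v z))"
proof -
  have "w \<bullet> (M *v z) = z \<bullet> (M *v w)" using sym_inner[OF assms] .
  thus ?thesis
    by (simp add: matrix_vector_right_distrib matrix_vector_mult_scaleR inner_add_left inner_add_right
        power2_eq_square algebra_simps)
qed

lemma gen_step:
  fixes C A :: "real^'n^'n" and v :: "'n \<Rightarrow> real^'n" and mu :: "'n \<Rightarrow> real" and K :: "'n set"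
  assumes spdC: "spd C" and symA: "transpose A = A"
   and cardK: "card K < CARD('n)"
   and orth: "\<forall>i\<in>K. \<forall>j\<in>K. v i \<bullet> (C *v v j) = (if i = j then 1 else 0)"
   and eig: "\<forall>i\<in>K. A *v v i = mu i *\<^sub>R (C *v v i)"
  shows "\<exists>w m. w \<bullet> (C *v w) = 1 \<and> (\<forall>i\<in>K. v i \<bullet> (C *v w) = 0) \<and> A *v w = m *\<^sub>R (C *v w)"
proof -
  have symC: "transpose C = C" and posC: "\<And>x. x \<noteq> 0 \<Longrightarrow> x \<bullet> (C *v x) > 0"
    using spdC unfolding spd_def by auto
  define S where "S = {x. \<forall>i\<in>K. v i \<bullet> (C *v x) = 0}"
  have subS: "subspace S"
    unfolding subspace_def S_def
    by (simp add: matrix_vector_right_distrib matrix_vector_mult_scaleR inner_add_right)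
  have closedS: "closed S" using closed_subspace[OF subS] .
  have scaleS: "x \<in> S \<Longrightarrow> c *\<^sub>R x \<in> S" for x c using subS by (simp add: subspace_scale)
  have addS: "x \<in> S \<Longrightarrow> y \<in> S \<Longrightarrow> x + y \<in> S" for x y using subS by (simp add: subspace_add)
  have finK: "finite K" by simp
  obtain y where y: "y \<notin> span (v ` K)"
  proof -
    have "\<not> UNIV \<subseteq> span (v ` K)"
    proof
      assume "UNIV \<subseteq> span (v ` K)"
      hence "dim (UNIV :: (real^'n) set) \<le> card (v ` K)" by (intro dim_le_card) auto
      also have "\<dots> \<le> card K" by (rule card_image_le) simp
      finally show False using cardK by simp
    qed
    thus ?thesis using that by blast
  qed
  define x0 where "x0 = y - (\<Sum>i\<in>K. (v i \<bullet> (C *v y)) *\<^sub>R v i)"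
  have x0S: "x0 \<in> S"
    unfolding S_def mem_Collect_eq
  proof (intro ballI)
    fix j assume j: "j \<in> K"
    have "v j \<bullet> (C *v x0) = v j \<bullet> (C *v y) - (\<Sum>i\<in>K. (v i \<bullet> (C *v y)) * (v j \<bullet> (C *v v i)))"
      unfolding x0_def by (simp add: matrix_vector_mult_diff_distrib vec.sum matrix_vector_mult_scaleR
          inner_diff_right inner_sum_right)
    also have "(\<Sum>i\<in>K. (v i \<bullet> (C *v y)) * (v j \<bullet> (C *v v i))) = (\<Sum>i\<in>K. if j = i then v i \<bullet> (C *v y) else 0)"
      by (rule sum.cong) (use orth j in auto)
    also have "\<dots> = v j \<bullet> (C *v y)" using j by (simp add: sum.delta)
    finally show "v j \<bullet> (C *v x0) = 0" by simp
  qed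
  have x0nz: "x0 \<noteq> 0"
  proof
    assume "x0 = 0"
    hence "y = (\<Sum>i\<in>K. (v i \<bullet> (C *v y)) *\<^sub>R v i)" unfolding x0_def by simp
    also have "\<dots> \<in> span (v ` K)" by (intro span_sum span_scale span_base) auto
    finally show False using y by simp
  qed
  define T where "T = S \<inter> sphere 0 1"
  have compT: "compact T" unfolding T_def by (intro closed_Int_compact closedS compact_sphere)
  have Tne: "T \<noteq> {}"
  proof -
    have "(1 / norm x0) *\<^sub>R x0 \<in> T" unfolding T_def using x0S x0nz scaleS by auto
    thus ?thesis by blast
  qed
  define R where "R x = (x \<bullet> (A *v x)) / (x \<bullet> (C *v x))" for x
  have contR: "continuous_on T R"
    unfolding R_def
    apply (intro continuous_intros matrix_vector_mult_linear_continuous_on)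
    using posC unfolding T_def by (metis IntD2 less_irrefl mem_sphere_0 norm_zero zero_neq_one)
  obtain u where uT: "u \<in> T" and umax: "\<And>x. x \<in> T \<Longrightarrow> R x \<le> R u"
    using continuous_attains_sup[OF compT Tne contR] by blast
  have uS: "u \<in> S" and unz: "u \<noteq> 0" using uT unfolding T_def by auto
  define c where "c = u \<bullet> (C *v u)"
  have cpos: "c > 0" using posC[OF unz] c_def by simp
  define m where "m = R u"
  define w where "w = (1 / sqrt c) *\<^sub>R u"
  have wS: "w \<in> S" unfolding w_def using uS scaleS by simp
  have wC: "w \<bullet> (C *v w) = 1"
    unfolding w_def using cpos by (simp add: matrix_vector_mult_scaleR c_def[symmetric] power2_eq_square[symmetric])
  have wA: "w \<bullet> (A *v w) = m"
    unfolding w_def m_def R_def using cpos by (simp add: matrix_vector_mult_scaleR c_def[symmetric] power2_eq_square[symmetric] field_simps)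
  have bound: "x \<bullet> (A *v x) \<le> m * (x \<bullet> (C *v x))" if xS: "x \<in> S" for x
  proof (cases "x = 0")
    case True thus ?thesis by simp
  next
    case False
    define x' where "x' = (1 / norm x) *\<^sub>R x"
    have "x' \<in> T" unfolding T_def x'_def using xS False scaleS by auto
    hence "R x' \<le> m" using umax m_def by simp
    moreover have "R x' = R x" unfolding R_def x'_def using False
      by (simp add: matrix_vector_mult_scaleR)
    ultimately have "R x \<le> m" by simp
    moreover have "x \<bullet> (C *v x) > 0" using posC False by simp
    ultimately show ?thesis unfolding R_def by (simp add: pos_divide_le_eq mult.commute)
  qed
  have stat: "z \<bullet> (A *v w) = m * (z \<bullet> (C *v w))" if zS: "z \<in> S" for z
  proof -
    have "2 * s * (z \<bullet> (A *v w) - m * (z \<bullet> (C *v w))) \<le> s^2 * (m * (z \<bullet> (C *v z)) - z \<bullet> (A *v z))" for s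
    proof -
      have "w + s *\<^sub>R z \<in> S" using wS zS scaleS addS by simp
      from bound[OF this] have "m + 2 * s * (z \<bullet> (A *v w)) + s^2 * (z \<bullet> (A *v z))
          \<le> m * (1 + 2 * s * (z \<bullet> (C *v w)) + s^2 * (z \<bullet> (C *v z)))"
        unfolding qexp[OF symA] qexp[OF symC] wA wC .
      thus ?thesis by (simp add: algebra_simps)
    qed
    from quad_trick[OF this] show ?thesis by simp
  qed
  define r where "r = A *v w - m *\<^sub>R (C *v w)"
  obtain z0 where z0: "C *v z0 = r" using surj_spd[OF spdC] by blast
  have vr: "v i \<bullet> r = 0" if i: "i \<in> K" for i
  proof -
    have "v i \<bullet> (A *v w) = w \<bullet> (A *v v i)" by (rule sym_inner[OF symA])
    also have "\<dots> = mu i * (w \<bullet> (C *v v i))" using eig i by simp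
    also have "w \<bullet> (C *v v i) = v i \<bullet> (C *v w)" by (rule sym_inner[OF symC])
    also have "\<dots> = 0" using wS i unfolding S_def by simp
    finally show ?thesis unfolding r_def using wS i unfolding S_def by (simp add: inner_diff_right)
  qed
  have z0S: "z0 \<in> S" unfolding S_def using vr z0 by simp
  have "z0 \<bullet> r = 0" unfolding r_def using stat[OF z0S] by (simp add: inner_diff_right)
  hence "z0 \<bullet> (C *v z0) = 0" using z0 by simp
  hence "z0 = 0" using posC by (metis less_irrefl)
  hence "r = 0" using z0 by simp
  hence "A *v w = m *\<^sub>R (C *v w)" unfolding r_def by simp
  moreover have "\<forall>i\<in>K. v i \<bullet> (C *v w) = 0" using wS unfolding S_def by simp
  ultimately show ?thesis using wC by blast
qed

lemma gen_all:
  fixes C A :: "real^'n^'n"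
  assumes spdC: "spd C" and symA: "transpose A = A"
  shows "\<exists>(v :: 'n \<Rightarrow> real^'n) mu. (\<forall>i j. v i \<bullet> (C *v v j) = (if i = j then 1 else 0)) \<and> (\<forall>i. A *v v i = mu i *\<^sub>R (C *v v i))"
proof -
  have symC: "transpose C = C" using spdC unfolding spd_def by auto
  have "finite (K :: 'n set) \<Longrightarrow> \<exists>v mu. (\<forall>i\<in>K. \<forall>j\<in>K. v i \<bullet> (C *v v j) = (if i = j then 1 else 0)) \<and> (\<forall>i\<in>K. A *v v i = mu i *\<^sub>R (C *v v i))" for K
  proof (induction K rule: finite_induct)
    case empty
    then show ?case by auto
  next
    case (insert k K)
    then obtain v mu where orth: "\<forall>i\<in>K. \<forall>j\<in>K. v i \<bullet> (C *v v j) = (if i = j then 1 else 0)"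
      and eig: "\<forall>i\<in>K. A *v v i = mu i *\<^sub>R (C *v v i)" by blast
    have "card K < card (insert k K)" using insert by simp
    also have "\<dots> \<le> CARD('n)" by (rule card_mono) auto
    finally have cK: "card K < CARD('n)" .
    obtain w m where w: "w \<bullet> (C *v w) = 1" "\<forall>i\<in>K. v i \<bullet> (C *v w) = 0" "A *v w = m *\<^sub>R (C *v w)"
      using gen_step[OF spdC symA cK orth eig] by blast
    define v' where "v' = v(k := w)"
    define mu' where "mu' = mu(k := m)"
    have "\<forall>i\<in>insert k K. \<forall>j\<in>insert k K. v' i \<bullet> (C *v v' j) = (if i = j then 1 else 0)"
    proof (intro ballI)
      fix i j assume i: "i \<in> insert k K" and j: "j \<in> insert k K"
      show "v' i \<bullet> (C *v v' j) = (if i = j then 1 else 0)"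
      proof (cases "i = k")
        case True
        show ?thesis
        proof (cases "j = k")
          case True thus ?thesis using \<open>i = k\<close> w v'_def by simp
        next
          case False
          hence "j \<in> K" using j by simp
          have "w \<bullet> (C *v v j) = v j \<bullet> (C *v w)" by (rule sym_inner[OF symC])
          thus ?thesis using \<open>i = k\<close> False w \<open>j \<in> K\<close> v'_def by simp
        qed
      next
        case False
        hence iK: "i \<in> K" using i by simp
        show ?thesis
        proof (cases "j = k")
          case True thus ?thesis using False w iK v'_def by simp
        next
          case False
          hence "j \<in> K" using j by simp
          thus ?thesis using \<open>i \<noteq> k\<close> False iK orth v'_def by simp
        qed
      qed
    qed
    moreover have "\<forall>i\<in>insert k K. A *v v' i = mu' i *\<^sub>R (C *v v' i)"
      using eig w insert.hyps(2) unfolding v'_def mu'_def by auto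
    ultimately show ?case by blast
  qed
  from this[OF finite[of UNIV]] obtain v :: "'n \<Rightarrow> real^'n" and mu where
    "\<forall>i\<in>UNIV. \<forall>j\<in>UNIV. v i \<bullet> (C *v v j) = (if i = j then 1 else 0)"
    "\<forall>i\<in>UNIV. A *v v i = mu i *\<^sub>R (C *v v i)" by blast
  thus ?thesis by (intro exI[of _ v] exI[of _ mu]) simp
qed

lemma PMP:
  fixes M :: "real^'n^'n" and v :: "'n \<Rightarrow> real^'n"
  shows "(transpose (\<chi> i j. v j $ i) ** M ** (\<chi> i j. v j $ i)) $ i $ j = v i \<bullet> (M *v v j)"
proof -
  have "(transpose (\<chi> i j. v j $ i) ** M ** (\<chi> i j. v j $ i)) $ i $ j
      = (\<Sum>l\<in>UNIV. \<Sum>k\<in>UNIV. v i $ k * M $ k $ l * v j $ l)"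
    by (simp add: matrix_matrix_mult_def transpose_def sum_distrib_right)
  also have "\<dots> = (\<Sum>k\<in>UNIV. \<Sum>l\<in>UNIV. v i $ k * M $ k $ l * v j $ l)" by (rule sum.swap)
  also have "\<dots> = v i \<bullet> (M *v v j)"
    by (simp add: inner_vec_def matrix_vector_mult_def sum_distrib_left mult.assoc)
  finally show ?thesis .
qed

lemma key:
  fixes A C :: "real^'n^'n"
  assumes spdC: "spd C" and spdA: "spd A"
  shows "det C > 0 \<and> det A > 0 \<and>
    ln (det A) - ln (det C) \<le> trace (matrix_inv C ** A) - real CARD('n) \<and>
    (ln (det A) - ln (det C) = trace (matrix_inv C ** A) - real CARD('n) \<longleftrightarrow> A = C)"
proof -
  have symA: "transpose A = A" and posA: "\<And>x. x \<noteq> 0 \<Longrightarrow> x \<bullet> (A *v x) > 0"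
    using spdA unfolding spd_def by auto
  obtain v :: "'n \<Rightarrow> real^'n" and mu where orth: "\<And>i j. v i \<bullet> (C *v v j) = (if i = j then 1 else 0)"
    and eig: "\<And>i. A *v v i = mu i *\<^sub>R (C *v v i)"
    using gen_all[OF spdC symA] by blast
  define P :: "real^'n^'n" where "P = (\<chi> i j. v j $ i)"
  define D :: "real^'n^'n" where "D = (\<chi> i j. if i = j then mu i else 0)"
  have PCP: "transpose P ** C ** P = mat 1"
    unfolding vec_eq_iff P_def by (simp add: PMP orth mat_def)
  have PAP: "transpose P ** A ** P = D"
    unfolding vec_eq_iff P_def D_def by (simp add: PMP eig orth)
  have mupos: "mu i > 0" for i
  proof -
    have "v i \<noteq> 0" using orth[of i i] by auto
    hence "v i \<bullet> (A *v v i) > 0" by (rule posA)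
    thus ?thesis using eig[of i] orth[of i i] by simp
  qed
  have d1: "det P * det C * det P = 1"
    using arg_cong[OF PCP, of det] by (simp add: det_mul)
  have d2: "det P * det A * det P = prod mu UNIV"
    using arg_cong[OF PAP, of det] unfolding D_def by (simp add: det_mul det_diagonal)
  have detC: "det C > 0"
  proof (rule ccontr)
    assume "\<not> det C > 0"
    hence "det P * det P * det C \<le> 0" by (simp add: mult_nonneg_nonpos)
    thus False using d1 by (simp add: algebra_simps)
  qed
  have detA_eq: "det A = det C * prod mu UNIV"
  proof -
    have "det A = det A * (det P * det C * det P)" using d1 by simp
    also have "\<dots> = det C * (det P * det A * det P)" by (simp add: algebra_simps)
    finally show ?thesis using d2 by simp
  qed
  have prodpos: "prod mu UNIV > 0" using mupos by (simp add: prod_pos)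
  have detA: "det A > 0" using detA_eq detC prodpos by simp
  have lndiff: "ln (det A) - ln (det C) = (\<Sum>i\<in>UNIV. ln (mu i))"
  proof -
    have "ln (det A) = ln (det C) + ln (prod mu UNIV)" proof -
      have lm: "\<And>x y::real. x > 0 \<Longrightarrow> y > 0 \<Longrightarrow> ln (x * y) = ln x + ln y" by (simp add: ln_mult)
      show ?thesis unfolding detA_eq by (rule lm[OF detC prodpos])
    qed
    moreover have "ln (prod mu UNIV) = (\<Sum>i\<in>UNIV. ln (mu i))" by (rule ln_prod) (use mupos in \<open>auto simp: less_imp_neq[symmetric]\<close>)
    ultimately show ?thesis by simp
  qed
  define Q where "Q = P ** transpose P"
  define R where "R = transpose P ** C"
  have RP: "R ** P = mat 1" using PCP unfolding R_def by simp
  hence PR: "P ** R = mat 1" using matrix_left_right_inverse by blast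
  have QC: "Q ** C = mat 1" using PR unfolding Q_def R_def by (simp add: matrix_mul_assoc)
  hence CQ: "C ** Q = mat 1" using matrix_left_right_inverse by blast
  have invC: "C ** matrix_inv C = mat 1 \<and> matrix_inv C ** C = mat 1"
    unfolding matrix_inv_def by (rule someI[of _ Q]) (use QC CQ in simp)
  have minv: "matrix_inv C = Q"
  proof -
    have "matrix_inv C = matrix_inv C ** (C ** Q)" using CQ by simp
    also have "\<dots> = (matrix_inv C ** C) ** Q" by (simp add: matrix_mul_assoc)
    finally show ?thesis using invC by simp
  qed
  have tr: "trace (matrix_inv C ** A) = (\<Sum>i\<in>UNIV. mu i)"
  proof -
    have "trace (matrix_inv C ** A) = trace (P ** (transpose P ** A))"
      unfolding minv Q_def by (simp add: matrix_mul_assoc)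
    also have "\<dots> = trace ((transpose P ** A) ** P)" by (rule trace_mul_sym)
    also have "\<dots> = trace D" using PAP by simp
    also have "\<dots> = (\<Sum>i\<in>UNIV. mu i)" unfolding trace_def D_def by simp
    finally show ?thesis .
  qed
  have card: "real CARD('n) = (\<Sum>i\<in>(UNIV::'n set). (1::real))" by simp
  have gap: "trace (matrix_inv C ** A) - real CARD('n) - (ln (det A) - ln (det C))
        = (\<Sum>i\<in>UNIV. mu i - 1 - ln (mu i))"
    unfolding tr lndiff card by (simp add: sum_subtractf)
  have termnn: "mu i - 1 - ln (mu i) \<ge> 0" for i using ln_le_minus_one[OF mupos[of i]] by simp
  have ineq: "ln (det A) - ln (det C) \<le> trace (matrix_inv C ** A) - real CARD('n)"
    using gap sum_nonneg[of UNIV "\<lambda>i. mu i - 1 - ln (mu i)"] termnn by simp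
  have eqiff: "ln (det A) - ln (det C) = trace (matrix_inv C ** A) - real CARD('n) \<longleftrightarrow> A = C"
  proof
    assume eq: "ln (det A) - ln (det C) = trace (matrix_inv C ** A) - real CARD('n)"
    hence "(\<Sum>i\<in>UNIV. mu i - 1 - ln (mu i)) = 0" using gap by simp
    hence "\<forall>i\<in>UNIV. mu i - 1 - ln (mu i) = 0"
      using sum_nonneg_eq_0_iff[of UNIV "\<lambda>i. mu i - 1 - ln (mu i)"] termnn by simp
    hence mu1: "mu i = 1" for i using ln_eq_minus_one[OF mupos[of i]] by simp
    have "D = mat 1" unfolding D_def mat_def vec_eq_iff using mu1 by simp
    hence same: "transpose P ** A ** P = transpose P ** C ** P" using PAP PCP by simp
    have RtPt: "transpose R ** transpose P = mat 1"
      using arg_cong[OF PR, of transpose] by (simp add: matrix_transpose_mul transpose_mat)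
    have "A = (transpose R ** transpose P) ** A ** (P ** R)" using RtPt PR by simp
    also have "\<dots> = transpose R ** (transpose P ** A ** P) ** R" by (simp add: matrix_mul_assoc)
    also have "\<dots> = transpose R ** (transpose P ** C ** P) ** R" using same by simp
    also have "\<dots> = (transpose R ** transpose P) ** C ** (P ** R)" by (simp add: matrix_mul_assoc)
    also have "\<dots> = C" using RtPt PR by simp
    finally show "A = C" .
  next
    assume "A = C"
    thus "ln (det A) - ln (det C) = trace (matrix_inv C ** A) - real CARD('n)"
      using invC by (simp add: trace_I)
  qed
  show ?thesis using detC detA ineq eqiff by blast
qed

theorem theorem2p1:
  fixes C1 C2 :: "real^'n^'n" and l1 l2 :: real and t :: "real^'n"
  assumes "spd C1" and "spd C2"
    and "0 \<le> l1" and "l1 \<le> 1" and "0 \<le> l2" and "l2 \<le> 1" and "l1 + l2 = 1"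
  defines "C \<equiv> l1 *\<^sub>R C1 + l2 *\<^sub>R C2"
  defines "d \<equiv> real CARD('n)"
  defines "F1 \<equiv> (\<lambda>s. l1 * exp (qform C1 s / 2) + l2 * exp (qform C2 s / 2) - exp (qform C s / 2))"
  defines "F2 \<equiv> (\<lambda>s. F1 s * ln ((2 * pi) powr d * det C)
            + l1 * exp (qform C1 s / 2) * trace (matrix_inv C ** C1)
            + l2 * exp (qform C2 s / 2) * trace (matrix_inv C ** C2)
            - d * exp (qform C s / 2))"
  defines "S \<equiv> {s. F1 s \<ge> 0 \<and> F2 s \<le> 0}"
  defines "G \<equiv> ln ((2 * pi * exp 1) powr d * det C) * exp (qform C t / 2)
            - l1 * ln ((2 * pi * exp 1) powr d * det C1) * exp (qform C1 t / 2)
            - l2 * ln ((2 * pi * exp 1) powr d * det C2) * exp (qform C2 t / 2)"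
  assumes "t \<in> S"
  shows "G \<ge> 0 \<and> (G = 0 \<longleftrightarrow> l1 * l2 = 0 \<or> C1 = C2)"
proof -
  note spd1 = assms(1) and spd2 = assms(2)
  have symC: "transpose C = C"
    using spd1 spd2 unfolding spd_def C_def by (simp add: transpose_def vec_eq_iff)
  have spdC: "spd C"
    unfolding spd_def
  proof (intro conjI allI impI symC)
    fix x :: "real^'n" assume "x \<noteq> 0"
    hence p1: "x \<bullet> (C1 *v x) > 0" and p2: "x \<bullet> (C2 *v x) > 0" using spd1 spd2 unfolding spd_def by auto
    have "x \<bullet> (C *v x) = l1 * (x \<bullet> (C1 *v x)) + l2 * (x \<bullet> (C2 *v x))"
      unfolding C_def by (simp add: matrix_vector_mult_add_rdistrib scaleR_mv inner_add_right)
    also have "\<dots> > 0"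
    proof (cases "l1 = 0")
      case True thus ?thesis using \<open>l1 + l2 = 1\<close> p2 by simp
    next
      case False
      hence "l1 > 0" using \<open>0 \<le> l1\<close> by simp
      thus ?thesis using p1 p2 \<open>0 \<le> l2\<close> by (simp add: add_pos_nonneg)
    qed
    finally show "x \<bullet> (C *v x) > 0" .
  qed
  obtain k1: "det C > 0" "det C1 > 0"
      "ln (det C1) - ln (det C) \<le> trace (matrix_inv C ** C1) - d"
      "ln (det C1) - ln (det C) = trace (matrix_inv C ** C1) - d \<longleftrightarrow> C1 = C"
    using key[OF spdC spd1] unfolding d_def by blast
  obtain k2: "det C2 > 0"
      "ln (det C2) - ln (det C) \<le> trace (matrix_inv C ** C2) - d"
      "ln (det C2) - ln (det C) = trace (matrix_inv C ** C2) - d \<longleftrightarrow> C2 = C"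
    using key[OF spdC spd2] unfolding d_def by blast
  define a where "a = d * ln (2 * pi)"
  have lnE: "ln ((2 * pi * exp 1) powr d * x) = a + d + ln x" if "x > 0" for x
  proof -
    have "ln ((2 * pi * exp 1) powr d * x) = ln ((2 * pi * exp 1) powr d) + ln x"
      using that by (simp add: ln_mult)
    also have "ln ((2 * pi * exp 1) powr d) = d * ln (2 * pi * exp 1)" by (simp add: ln_powr)
    also have "ln (2 * pi * exp 1) = ln (2 * pi) + 1" by (simp add: ln_mult)
    finally show ?thesis unfolding a_def by (simp add: algebra_simps)
  qed
  have lnP: "ln ((2 * pi) powr d * x) = a + ln x" if "x > 0" for x
  proof -
    have "ln ((2 * pi) powr d * x) = ln ((2 * pi) powr d) + ln x"
      using that by (simp add: ln_mult)
    also have "ln ((2 * pi) powr d) = d * ln (2 * pi)" by (simp add: ln_powr)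
    finally show ?thesis unfolding a_def by simp
  qed
  define E where "E = exp (qform C t / 2)"
  define E1 where "E1 = exp (qform C1 t / 2)"
  define E2 where "E2 = exp (qform C2 t / 2)"
  define g1 where "g1 = trace (matrix_inv C ** C1) - d - (ln (det C1) - ln (det C))"
  define g2 where "g2 = trace (matrix_inv C ** C2) - d - (ln (det C2) - ln (det C))"
  have g1: "g1 \<ge> 0" and g2: "g2 \<ge> 0" using k1 k2 unfolding g1_def g2_def by auto
  have F2t: "F2 t \<le> 0" using \<open>t \<in> S\<close> unfolding S_def by simp
  have F2eq: "F2 t = (l1 * E1 + l2 * E2 - E) * (a + ln (det C)) + l1 * E1 * trace (matrix_inv C ** C1)
      + l2 * E2 * trace (matrix_inv C ** C2) - d * E"
    unfolding F2_def F1_def E_def E1_def E2_def using lnP[OF k1(1)] by simp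
  have Geq: "G = (a + d + ln (det C)) * E - l1 * (a + d + ln (det C1)) * E1 - l2 * (a + d + ln (det C2)) * E2"
    unfolding G_def E_def E1_def E2_def using lnE[OF k1(1)] lnE[OF k1(2)] lnE[OF k2(1)] by simp
  have ident: "G = - F2 t + l1 * E1 * g1 + l2 * E2 * g2"
    unfolding Geq F2eq g1_def g2_def using \<open>l1 + l2 = 1\<close>
    by (simp add: algebra_simps)
  have Epos: "E1 > 0" "E2 > 0" unfolding E1_def E2_def by auto
  have t1: "l1 * E1 * g1 \<ge> 0" using g1 Epos \<open>0 \<le> l1\<close> by simp
  have t2: "l2 * E2 * g2 \<ge> 0" using g2 Epos \<open>0 \<le> l2\<close> by simp
  have Gnn: "G \<ge> 0" using ident F2t t1 t2 by linarith
  have "G = 0 \<longleftrightarrow> l1 * l2 = 0 \<or> C1 = C2"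
  proof
    assume "G = 0"
    hence z1: "l1 * E1 * g1 = 0" and z2: "l2 * E2 * g2 = 0" using ident F2t t1 t2 by linarith+
    show "l1 * l2 = 0 \<or> C1 = C2"
    proof (cases "l1 * l2 = 0")
      case False
      hence "l1 \<noteq> 0" "l2 \<noteq> 0" by auto
      hence "g1 = 0" "g2 = 0" using z1 z2 Epos by auto
      hence "C1 = C" "C2 = C" using k1(4) k2(3) unfolding g1_def g2_def by auto
      thus ?thesis by simp
    qed simp
  next
    assume "l1 * l2 = 0 \<or> C1 = C2"
    moreover
    { assume "l1 = 0"
      hence l2: "l2 = 1" using \<open>l1 + l2 = 1\<close> by simp
      have "C = C2" unfolding C_def using \<open>l1 = 0\<close> l2 by simp
      hence "G = 0" unfolding G_def using \<open>l1 = 0\<close> l2 by simp }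
    moreover
    { assume "l2 = 0"
      hence l1: "l1 = 1" using \<open>l1 + l2 = 1\<close> by simp
      have "C = C1" unfolding C_def using \<open>l2 = 0\<close> l1 by simp
      hence "G = 0" unfolding G_def using \<open>l2 = 0\<close> l1 by simp }
    moreover
    { assume e: "C1 = C2"
      have "C = (l1 + l2) *\<^sub>R C1" unfolding C_def e by (simp only: scaleR_add_left)
      hence "C = C1" using \<open>l1 + l2 = 1\<close> by simp
      hence "G = (1 - l1 - l2) * (ln ((2 * pi * exp 1) powr d * det C1) * exp (qform C1 t / 2))"
        unfolding G_def e[symmetric] by (simp add: algebra_simps)
      hence "G = 0" using \<open>l1 + l2 = 1\<close> by simp }
    ultimately show "G = 0" by auto
  qed
  thus ?thesis using Gnn by simp
qed

end
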